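(* For all $\eta,\varepsilon>0$ and $c,p\in\mathbb N$ there exist $\eta'>0$ and $n_0$ such that the following holds for all $n\ge n_0$. Let $H$ be a $3$-graph of order $n$ and let $X,Y\subseteq V(H)$ be disjoint sets that are both $(c,\eta)$-closed in $H$. Suppose there are at least $\varepsilon n^{4p+1}$ $(X,Y)$-bridges of length $p$. Then $X\cup Y$ is $(2c+p,\eta')$-closed in $H$.
   Context: $K_4^-$ is the $3$-graph with $4$ vertices and $3$ edges; a $K_4^-$-factor is a set of vertex-disjoint (not necessarily induced) copies of $K_4^-$ covering all vertices. Let $H$ be a $3$-graph of order $n$. For $c\in\mathbb N$ and vertices $x,y$, a set $S\subseteq V(H)$ is an $(x,y)$-connector of length $c$ if $S\cap\{x,y\}=\emptyset$, $|S|=4c-1$, and both $H[S\cup\{x\}]$ and $H[S\cup\{y\}]$ contain $K_4^-$-factors. Vertices $x,y$ are $(c,\eta)$-close if there are at least $\eta n^{4c-1}$ $(x,y)$-connectors of length $c$ in $H$. A set $U\subseteq V(H)$ is $(c,\eta)$-closed in $H$ if every two vertices of $U$ are $(c,\eta)$-close (connectors may use vertices outside $U$). For $X,Y\subseteq V(H)$, a triple $(x,y,S)$ is an $(X,Y)$-bridge of length $c$ if $x\in X$, $y\in Y$ and $S$ is an $(x,y)$-connector of length $c$. *)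

theory Defs
  imports Main "HOL-Library.Disjoint_Sets" Complex_Main
begin

definition three_graph :: "'a set \<Rightarrow> 'a set set \<Rightarrow> bool" where
  "three_graph V E \<longleftrightarrow> finite V \<and> (\<forall>e\<in>E. e \<subseteq> V \<and> card e = 3)"

text \<open>A (not necessarily induced) copy of K4^- on the 4-set Q: at least 3 of the
  4 triples inside Q are edges.\<close>
definition K4m_copy :: "'a set set \<Rightarrow> 'a set \<Rightarrow> bool" where
  "K4m_copy E Q \<longleftrightarrow> finite Q \<and> card Q = 4 \<and> 3 \<le> card {e\<in>E. e \<subseteq> Q}"

definition has_K4m_factor :: "'a set set \<Rightarrow> 'a set \<Rightarrow> bool" where
  "has_K4m_factor E T \<longleftrightarrow>
     (\<exists>P. \<Union>P = T \<and> disjoint P \<and> (\<forall>Q\<in>P. K4m_copy E Q))"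

definition connector :: "'a set \<Rightarrow> 'a set set \<Rightarrow> nat \<Rightarrow> 'a \<Rightarrow> 'a \<Rightarrow> 'a set \<Rightarrow> bool" where
  "connector V E c x y S \<longleftrightarrow> S \<subseteq> V \<and> x \<notin> S \<and> y \<notin> S \<and> card S = 4*c - 1 \<and>
     has_K4m_factor E (insert x S) \<and> has_K4m_factor E (insert y S)"

definition close :: "'a set \<Rightarrow> 'a set set \<Rightarrow> nat \<Rightarrow> real \<Rightarrow> 'a \<Rightarrow> 'a \<Rightarrow> bool" where
  "close V E c \<eta> x y \<longleftrightarrow>
     real (card {S. connector V E c x y S}) \<ge> \<eta> * real (card V) ^ (4*c - 1)"

definition closed :: "'a set \<Rightarrow> 'a set set \<Rightarrow> nat \<Rightarrow> real \<Rightarrow> 'a set \<Rightarrow> bool" where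
  "closed V E c \<eta> U \<longleftrightarrow> (\<forall>x\<in>U. \<forall>y\<in>U. x \<noteq> y \<longrightarrow> close V E c \<eta> x y)"

definition bridges :: "'a set \<Rightarrow> 'a set set \<Rightarrow> nat \<Rightarrow> 'a set \<Rightarrow> 'a set \<Rightarrow> ('a \<times> 'a \<times> 'a set) set" where
  "bridges V E c X Y = {(x, y, S). x \<in> X \<and> y \<in> Y \<and> connector V E c x y S}"

end

theory Submission
  imports Defs
begin

lemma choose_le_pow': "n choose r \<le> n ^ r"
  by (cases "r \<le> n") (auto simp: binomial_le_pow binomial_eq_0)

lemma card_subs_le:
  assumes "finite V"
  shows "card {S. S \<subseteq> V \<and> card S = k} \<le> card V ^ k"
  using n_subsets[OF assms, of k] choose_le_pow' by simp

lemma card_subs_mem_le: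
  assumes "finite V" "k \<ge> 1"
  shows "card {S. S \<subseteq> V \<and> card S = k \<and> v \<in> S} \<le> card V ^ (k-1)"
proof -
  have "inj_on (\<lambda>S. S - {v}) {S. S \<subseteq> V \<and> card S = k \<and> v \<in> S}"
    by (auto simp: inj_on_def)
  moreover have "(\<lambda>S. S - {v}) ` {S. S \<subseteq> V \<and> card S = k \<and> v \<in> S} \<subseteq> {S. S \<subseteq> V \<and> card S = k - 1}"
    using assms by (auto simp: card_Diff_singleton intro: finite_subset)
  ultimately have "card {S. S \<subseteq> V \<and> card S = k \<and> v \<in> S} \<le> card {S. S \<subseteq> V \<and> card S = k - 1}"
    using assms by (intro card_inj_on_le) auto
  also have "\<dots> \<le> card V ^ (k-1)" by (rule card_subs_le[OF assms(1)])
  finally show ?thesis .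
qed

lemma card_subs_meet_le:
  assumes "finite V" "k \<ge> 1" "finite Z"
  shows "card {S. S \<subseteq> V \<and> card S = k \<and> S \<inter> Z \<noteq> {}} \<le> card Z * card V ^ (k-1)"
proof -
  have "{S. S \<subseteq> V \<and> card S = k \<and> S \<inter> Z \<noteq> {}} \<subseteq> (\<Union>v\<in>Z. {S. S \<subseteq> V \<and> card S = k \<and> v \<in> S})"
    by auto
  hence "card {S. S \<subseteq> V \<and> card S = k \<and> S \<inter> Z \<noteq> {}} \<le> card (\<Union>v\<in>Z. {S. S \<subseteq> V \<and> card S = k \<and> v \<in> S})"
    using assms by (intro card_mono) (auto intro!: finite_UN_I finite_subset[of _ "Pow V"])
  also have "\<dots> \<le> (\<Sum>v\<in>Z. card {S. S \<subseteq> V \<and> card S = k \<and> v \<in> S})"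
    using assms by (intro card_UN_le) auto
  also have "\<dots> \<le> (\<Sum>v\<in>Z. card V ^ (k-1))"
    using assms by (intro sum_mono card_subs_mem_le) auto
  finally show ?thesis by simp
qed

lemma factor_union:
  assumes "has_K4m_factor E A" "has_K4m_factor E B" "A \<inter> B = {}"
  shows "has_K4m_factor E (A \<union> B)"
proof -
  obtain P1 where P1: "\<Union>P1 = A" "disjoint P1" "\<forall>Q\<in>P1. K4m_copy E Q"
    using assms(1) unfolding has_K4m_factor_def by blast
  obtain P2 where P2: "\<Union>P2 = B" "disjoint P2" "\<forall>Q\<in>P2. K4m_copy E Q"
    using assms(2) unfolding has_K4m_factor_def by blast
  have ne: "Q \<noteq> {}" if "K4m_copy E Q" for Q using that by (auto simp: K4m_copy_def)
  have "disjoint (P1 \<union> P2)"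
    unfolding disjoint_def
  proof (intro ballI impI)
    fix a b assume ab: "a \<in> P1 \<union> P2" "b \<in> P1 \<union> P2" "a \<noteq> b"
    show "a \<inter> b = {}"
    proof (cases "a \<in> P1")
      case True
      then show ?thesis
      proof (cases "b \<in> P1")
        case True with \<open>a \<in> P1\<close> ab P1(2) show ?thesis by (auto simp: disjoint_def)
      next
        case False then have "b \<in> P2" using ab by auto
        with \<open>a \<in> P1\<close> P1(1) P2(1) assms(3) show ?thesis by blast
      qed
    next
      case False then have "a \<in> P2" using ab by auto
      show ?thesis
      proof (cases "b \<in> P2")
        case True with \<open>a \<in> P2\<close> ab P2(2) show ?thesis by (auto simp: disjoint_def)
      next
        case False then have "b \<in> P1" using ab by auto
        with \<open>a \<in> P2\<close> P1(1) P2(1) assms(3) show ?thesis by blast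
      qed
    qed
  qed
  moreover have "\<Union>(P1 \<union> P2) = A \<union> B" using P1 P2 by auto
  ultimately show ?thesis unfolding has_K4m_factor_def using P1(3) P2(3)
    by (intro exI[of _ "P1 \<union> P2"]) auto
qed

lemma connector_sym: "connector V E c x y S = connector V E c y x S"
  by (auto simp: connector_def)

lemma close_sym: "close V E c \<eta> x y = close V E c \<eta> y x"
  proof -
  have "{S. connector V E c x y S} = {S. connector V E c y x S}" by (simp add: connector_sym)
  thus ?thesis unfolding close_def by simp
qed

lemma bridges_swap: "card (bridges V E p Y X) = card (bridges V E p X Y)"
proof -
  have "bridges V E p Y X = (\<lambda>(x,y,S). (y,x,S)) ` bridges V E p X Y"
    by (auto simp: bridges_def connector_sym image_iff)
  moreover have "inj_on (\<lambda>(x,y,S). (y,x,S)) (bridges V E p X Y)"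
    by (auto simp: inj_on_def)
  ultimately show ?thesis by (simp add: card_image)
qed

lemma count3:
  fixes a b :: real and K :: nat
  assumes "finite G" "\<And>g. g \<in> G \<Longrightarrow> finite (A g) \<and> real (card (A g)) \<ge> a"
    "\<And>g s. g \<in> G \<Longrightarrow> s \<in> A g \<Longrightarrow> finite (B g s) \<and> real (card (B g s)) \<ge> b"
    "\<And>g s t. g \<in> G \<Longrightarrow> s \<in> A g \<Longrightarrow> t \<in> B g s \<Longrightarrow> f g s t \<in> C"
    "finite C"
    "\<And>T. T \<in> C \<Longrightarrow> card {(g,s,t). g \<in> G \<and> s \<in> A g \<and> t \<in> B g s \<and> f g s t = T} \<le> K"
    "a \<ge> 0" "b \<ge> 0"
  shows "real (card G) * a * b \<le> real K * real (card C)"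
proof -
  define Sig where "Sig = (SIGMA g:G. SIGMA s:A g. B g s)"
  have finSig: "finite Sig" unfolding Sig_def using assms(1,2,3) by (intro finite_SigmaI) auto
  have "card Sig = (\<Sum>g\<in>G. \<Sum>s\<in>A g. card (B g s))"
    unfolding Sig_def using assms(1,2,3) by (simp add: card_SigmaI)
  hence "real (card Sig) = (\<Sum>g\<in>G. \<Sum>s\<in>A g. real (card (B g s)))" by simp
  also have "\<dots> \<ge> (\<Sum>g\<in>G. \<Sum>s\<in>A g. b)"
    using assms(3) by (intro sum_mono) auto
  moreover have "(\<Sum>g\<in>G. \<Sum>s\<in>A g. b) = (\<Sum>g\<in>G. real (card (A g)) * b)" by simp
  moreover have "(\<Sum>g\<in>G. real (card (A g)) * b) \<ge> (\<Sum>g\<in>G. a * b)"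
    using assms(2,8) by (intro sum_mono mult_right_mono) auto
  ultimately have low: "real (card Sig) \<ge> real (card G) * a * b" by simp
  define fib where "fib T = {(g,s,t). g \<in> G \<and> s \<in> A g \<and> t \<in> B g s \<and> f g s t = T}" for T
  have "Sig \<subseteq> (\<Union>T\<in>C. fib T)" unfolding Sig_def fib_def using assms(4) by auto
  hence "card Sig \<le> card (\<Union>T\<in>C. fib T)"
    using assms(5) finSig by (intro card_mono) (auto simp: fib_def Sig_def intro!: finite_subset[OF _ finSig])
  also have "\<dots> \<le> (\<Sum>T\<in>C. card (fib T))" using assms(5) by (rule card_UN_le)
  also have "\<dots> \<le> (\<Sum>T\<in>C. K)" using assms(6) unfolding fib_def by (intro sum_mono) auto
  finally have "card Sig \<le> K * card C" by (simp add: mult.commute)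
  hence "real (card Sig) \<le> real K * real (card C)" by (metis of_nat_le_iff of_nat_mult)
  with low show ?thesis by linarith
qed

lemma finite_conn: "three_graph V E \<Longrightarrow> finite {S. connector V E c x y S}"
  by (rule finite_subset[of _ "Pow V"]) (auto simp: connector_def three_graph_def)

lemma avoid:
  fixes \<eta> :: real
  assumes tg: "three_graph V E" and nV: "card V = n" and cl: "close V E c \<eta> u v"
    and fZ: "finite Z" and cZ: "card Z \<le> L" and c1: "c \<ge> 1" and n1: "real n \<ge> 1"
    and n2: "real n \<ge> 2 * real L / \<eta>" and eta: "\<eta> > 0"
  shows "finite {S. connector V E c u v S \<and> S \<inter> Z = {}} \<and>
         real (card {S. connector V E c u v S \<and> S \<inter> Z = {}}) \<ge> \<eta>/2 * real n ^ (4*c-1)"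
proof -
  have fV: "finite V" using tg by (simp add: three_graph_def)
  define D where "D = {S. connector V E c u v S \<and> S \<inter> Z = {}}"
  define M where "M = {S. S \<subseteq> V \<and> card S = 4*c-1 \<and> S \<inter> Z \<noteq> {}}"
  have fD: "finite D" unfolding D_def by (rule finite_subset[OF _ finite_conn[OF tg]]) auto
  have fM: "finite M" unfolding M_def by (rule finite_subset[of _ "Pow V"]) (auto simp: fV)
  have "{S. connector V E c u v S} \<subseteq> D \<union> M" unfolding D_def M_def by (auto simp: connector_def)
  hence "card {S. connector V E c u v S} \<le> card (D \<union> M)" using fD fM by (intro card_mono) auto
  also have "\<dots> \<le> card D + card M" by (rule card_Un_le)
  also have "card M \<le> card Z * n ^ (4*c-1-1)" unfolding M_def nV[symmetric]
    using c1 fV fZ by (intro card_subs_meet_le) auto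
  finally have "card {S. connector V E c u v S} \<le> card D + card Z * n ^ (4*c-2)"
    by (simp add: numeral_eq_Suc)
  hence "real (card {S. connector V E c u v S}) \<le> real (card D + card Z * n ^ (4*c-2))"
    by (simp only: of_nat_le_iff)
  hence "real (card {S. connector V E c u v S}) \<le> real (card D) + real (card Z) * real n ^ (4*c-2)"
    by simp
  moreover have "\<eta> * real n ^ (4*c-1) \<le> real (card {S. connector V E c u v S})"
    using cl nV by (simp add: close_def)
  moreover have "real (card Z) * real n ^ (4*c-2) \<le> \<eta>/2 * real n ^ (4*c-1)"
  proof -
    have "4*c-1 = Suc (4*c-2)" using c1 by arith
    hence pw: "real n ^ (4*c-1) = real n * real n ^ (4*c-2)" by simp
    have "real (card Z) \<le> \<eta>/2 * real n"
    proof -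
      have "real (card Z) \<le> real L" using cZ by simp
      also have "\<dots> \<le> \<eta>/2 * real n" using n2 eta by (simp add: field_simps)
      finally show ?thesis .
    qed
    hence "real (card Z) * real n ^ (4*c-2) \<le> (\<eta>/2 * real n) * real n ^ (4*c-2)"
      by (intro mult_right_mono) auto
    thus ?thesis using pw by (simp add: mult.assoc)
  qed
  ultimately show ?thesis using fD unfolding D_def by linarith
qed

lemma bridges_sub: "three_graph V E \<Longrightarrow>
   bridges V E p X Y \<subseteq> X \<times> Y \<times> {S. S \<subseteq> V \<and> card S = 4*p-1}"
  by (auto simp: bridges_def connector_def)

lemma finite_bridges: "three_graph V E \<Longrightarrow> X \<subseteq> V \<Longrightarrow> Y \<subseteq> V \<Longrightarrow> finite (bridges V E p X Y)"
proof -
  assume tg: "three_graph V E" and XV: "X \<subseteq> V" and YV: "Y \<subseteq> V"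
  have fV: "finite V" using tg by (simp add: three_graph_def)
  have "finite {S. S \<subseteq> V \<and> card S = 4*p-1}" by (rule finite_subset[of _ "Pow V"]) (use fV in auto)
  moreover have "finite X" "finite Y" using fV XV YV finite_subset by auto
  ultimately show ?thesis by (intro finite_subset[OF bridges_sub[OF tg]]) auto
qed

lemma bad1:
  assumes tg: "three_graph V E" and "X \<subseteq> V" "Y \<subseteq> V" "card V = n" "p \<ge> 1"
  shows "card (bridges V E p X Y \<inter> {b. fst b = u}) \<le> n ^ (4*p)"
proof -
  have fV: "finite V" using tg by (simp add: three_graph_def)
  have "bridges V E p X Y \<inter> {b. fst b = u} \<subseteq> {u} \<times> Y \<times> {S. S \<subseteq> V \<and> card S = 4*p-1}"
    by (auto simp: bridges_def connector_def)
  hence "card (bridges V E p X Y \<inter> {b. fst b = u}) \<le> card ({u} \<times> Y \<times> {S. S \<subseteq> V \<and> card S = 4*p-1})"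
    using assms fV by (intro card_mono finite_cartesian_product)
       (auto intro: finite_subset[of _ "Pow V"] finite_subset[of _ V])
  also have "\<dots> = card Y * card {S. S \<subseteq> V \<and> card S = 4*p-1}" by (simp add: card_cartesian_product)
  also have "\<dots> \<le> n * n ^ (4*p-1)"
    using card_mono[OF fV assms(3)] card_subs_le[OF fV, of "4*p-1"] assms(4) by (intro mult_le_mono) auto
  also have "\<dots> = n ^ (4*p)"
  proof -
    have "4*p = Suc (4*p-1)" using assms(5) by arith
    thus ?thesis by (metis power_Suc)
  qed
  finally show ?thesis .
qed

lemma bad2:
  assumes tg: "three_graph V E" and "X \<subseteq> V" "Y \<subseteq> V" "card V = n" "p \<ge> 1"
  shows "card (bridges V E p X Y \<inter> {b. fst (snd b) = u}) \<le> n ^ (4*p)"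
proof -
  have fV: "finite V" using tg by (simp add: three_graph_def)
  have "bridges V E p X Y \<inter> {b. fst (snd b) = u} \<subseteq> X \<times> {u} \<times> {S. S \<subseteq> V \<and> card S = 4*p-1}"
    by (auto simp: bridges_def connector_def)
  hence "card (bridges V E p X Y \<inter> {b. fst (snd b) = u}) \<le> card (X \<times> {u} \<times> {S. S \<subseteq> V \<and> card S = 4*p-1})"
    using assms fV by (intro card_mono finite_cartesian_product)
       (auto intro: finite_subset[of _ "Pow V"] finite_subset[of _ V])
  also have "\<dots> = card X * card {S. S \<subseteq> V \<and> card S = 4*p-1}" by (simp add: card_cartesian_product)
  also have "\<dots> \<le> n * n ^ (4*p-1)"
    using card_mono[OF fV assms(2)] card_subs_le[OF fV, of "4*p-1"] assms(4) by (intro mult_le_mono) auto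
  also have "\<dots> = n ^ (4*p)"
  proof -
    have "4*p = Suc (4*p-1)" using assms(5) by arith
    thus ?thesis by (metis power_Suc)
  qed
  finally show ?thesis .
qed

lemma bad3:
  assumes tg: "three_graph V E" and "X \<subseteq> V" "Y \<subseteq> V" "card V = n" "p \<ge> 1"
  shows "card (bridges V E p X Y \<inter> {b. u \<in> snd (snd b)}) \<le> n ^ (4*p)"
proof -
  have fV: "finite V" using tg by (simp add: three_graph_def)
  have "bridges V E p X Y \<inter> {b. u \<in> snd (snd b)} \<subseteq> X \<times> Y \<times> {S. S \<subseteq> V \<and> card S = 4*p-1 \<and> u \<in> S}"
    by (auto simp: bridges_def connector_def)
  hence "card (bridges V E p X Y \<inter> {b. u \<in> snd (snd b)}) \<le> card (X \<times> Y \<times> {S. S \<subseteq> V \<and> card S = 4*p-1 \<and> u \<in> S})"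
    using assms fV by (intro card_mono finite_cartesian_product)
       (auto intro: finite_subset[of _ "Pow V"] finite_subset[of _ V])
  also have "\<dots> = card X * (card Y * card {S. S \<subseteq> V \<and> card S = 4*p-1 \<and> u \<in> S})" by (simp add: card_cartesian_product)
  also have "\<dots> \<le> n * (n * n ^ (4*p-1-1))"
    using card_mono[OF fV assms(2)] card_mono[OF fV assms(3)] card_subs_mem_le[OF fV, of "4*p-1" u] assms(4,5)
    by (intro mult_le_mono) auto
  also have "\<dots> = n ^ (4*p)"
  proof -
    have "4*p = Suc (Suc (4*p-1-1))" using assms(5) by arith
    thus ?thesis by (metis power_Suc)
  qed
  finally show ?thesis .
qed

lemma good_bridges:
  fixes \<epsilon> :: real
  assumes tg: "three_graph V E" and XV: "X \<subseteq> V" and YV: "Y \<subseteq> V" and nV: "card V = n" and p1: "p \<ge> 1"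
    and br: "\<epsilon> * real n ^ (4*p+1) \<le> real (card (bridges V E p X Y))"
    and n1: "real n \<ge> 1" and n2: "real n \<ge> 8/\<epsilon>" and eps: "\<epsilon> > 0"
    and GB: "G \<subseteq> bridges V E p X Y"
    and cov: "bridges V E p X Y \<subseteq> G \<union> D1 \<union> D2 \<union> D3 \<union> D4"
    and d1: "card (bridges V E p X Y \<inter> D1) \<le> n^(4*p)"
    and d2: "card (bridges V E p X Y \<inter> D2) \<le> n^(4*p)"
    and d3: "card (bridges V E p X Y \<inter> D3) \<le> n^(4*p)"
    and d4: "card (bridges V E p X Y \<inter> D4) \<le> n^(4*p)"
  shows "finite G \<and> real (card G) \<ge> \<epsilon>/2 * real n ^ (4*p+1)"
proof -
  let ?B = "bridges V E p X Y"
  have fB: "finite ?B" using finite_bridges[OF tg XV YV] .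
  have fG: "finite G" using GB fB by (rule finite_subset)
  have "?B = G \<union> (?B \<inter> D1) \<union> (?B \<inter> D2) \<union> (?B \<inter> D3) \<union> (?B \<inter> D4)" using cov GB by auto
  hence "card ?B \<le> card G + card (?B \<inter> D1) + card (?B \<inter> D2) + card (?B \<inter> D3) + card (?B \<inter> D4)"
  proof -
    assume eq: "?B = G \<union> (?B \<inter> D1) \<union> (?B \<inter> D2) \<union> (?B \<inter> D3) \<union> (?B \<inter> D4)"
    have "card (G \<union> (?B \<inter> D1) \<union> (?B \<inter> D2) \<union> (?B \<inter> D3) \<union> (?B \<inter> D4))
      \<le> card (G \<union> (?B \<inter> D1) \<union> (?B \<inter> D2) \<union> (?B \<inter> D3)) + card (?B \<inter> D4)" by (rule card_Un_le)
    also have "card (G \<union> (?B \<inter> D1) \<union> (?B \<inter> D2) \<union> (?B \<inter> D3))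
      \<le> card (G \<union> (?B \<inter> D1) \<union> (?B \<inter> D2)) + card (?B \<inter> D3)" by (rule card_Un_le)
    also have "card (G \<union> (?B \<inter> D1) \<union> (?B \<inter> D2))
      \<le> card (G \<union> (?B \<inter> D1)) + card (?B \<inter> D2)" by (rule card_Un_le)
    also have "card (G \<union> (?B \<inter> D1)) \<le> card G + card (?B \<inter> D1)" by (rule card_Un_le)
    finally show ?thesis using eq by simp
  qed
  hence "card ?B \<le> card G + 4 * n^(4*p)" using d1 d2 d3 d4 by linarith
  hence "real (card ?B) \<le> real (card G) + 4 * real n^(4*p)"
    by (simp only: of_nat_add of_nat_le_iff of_nat_mult of_nat_numeral of_nat_power[symmetric])
  moreover have "4 * real n^(4*p) \<le> \<epsilon>/2 * real n ^ (4*p+1)"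
  proof -
    have "4 \<le> \<epsilon>/2 * real n" using n2 eps by (simp add: field_simps)
    hence "4 * real n^(4*p) \<le> (\<epsilon>/2 * real n) * real n^(4*p)" by (intro mult_right_mono) auto
    thus ?thesis by (simp add: mult_ac)
  qed
  ultimately show ?thesis using br fG by linarith
qed

lemma glueA:
  assumes c1: "c \<ge> 1" and p1: "p \<ge> 1"
    and C1: "connector V E c x x' S1" and C: "connector V E p x' y' S" and C2: "connector V E c y' y S2"
    and d: "S1 \<inter> S = {}" "y' \<notin> S1" "y \<notin> S1" "S1 \<inter> S2 = {}" "x' \<notin> S2" "S \<inter> S2 = {}"
      "x \<notin> S2" "x \<notin> S" "y \<notin> S" "x \<noteq> x'" "x \<noteq> y'" "y \<noteq> x'" "y \<noteq> y'" "x' \<noteq> y'"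
      "x' \<in> V" "y' \<in> V"
  shows "connector V E (2*c+p) x y (S1 \<union> insert x' (insert y' (S \<union> S2)))"
proof -
  have cS1: "card S1 = 4*c-1" and cS: "card S = 4*p-1" and cS2: "card S2 = 4*c-1"
    using C1 C C2 by (auto simp: connector_def)
  have fin: "finite S1" "finite S" "finite S2"
    using cS1 cS cS2 c1 p1 by (auto intro: card_ge_0_finite)
  have x'S1: "x' \<notin> S1" and x'S: "x' \<notin> S" and y'S: "y' \<notin> S" and y'S2: "y' \<notin> S2" and xS1: "x \<notin> S1" and yS2: "y \<notin> S2"
    using C1 C C2 by (auto simp: connector_def)
  have e1: "card (S \<union> S2) = card S + card S2" using fin d by (intro card_Un_disjoint) auto
  have e2: "card (S1 \<union> (S \<union> S2)) = card S1 + card (S \<union> S2)" using fin d by (intro card_Un_disjoint) auto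
  have "card (S1 \<union> insert x' (insert y' (S \<union> S2))) = card S1 + (Suc (Suc (card S + card S2)))"
    using fin d x'S1 x'S y'S y'S2 by (simp add: e1 e2 card_insert_if)
  also have "\<dots> = 4*(2*c+p) - 1" using cS1 cS cS2 c1 p1 by simp
  finally have card: "card (S1 \<union> insert x' (insert y' (S \<union> S2))) = 4*(2*c+p) - 1" .
  have f1: "has_K4m_factor E (insert x S1)" and f2: "has_K4m_factor E (insert x' S)" and f3: "has_K4m_factor E (insert y' S2)"
   and g1: "has_K4m_factor E (insert x' S1)" and g2: "has_K4m_factor E (insert y' S)" and g3: "has_K4m_factor E (insert y S2)"
    using C1 C C2 by (auto simp: connector_def)
  have "has_K4m_factor E (insert x S1 \<union> (insert x' S \<union> insert y' S2))"
    using d x'S y'S2 xS1 x'S1 y'S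
    by (intro factor_union f1 f2 f3) auto
  moreover have "insert x (S1 \<union> insert x' (insert y' (S \<union> S2))) = insert x S1 \<union> (insert x' S \<union> insert y' S2)" by auto
  moreover have "has_K4m_factor E (insert x' S1 \<union> (insert y' S \<union> insert y S2))"
    using d x'S y'S2 yS2 x'S1 y'S
    by (intro factor_union g1 g2 g3) auto
  moreover have "insert y (S1 \<union> insert x' (insert y' (S \<union> S2))) = insert x' S1 \<union> (insert y' S \<union> insert y S2)" by auto
  moreover have "S1 \<union> insert x' (insert y' (S \<union> S2)) \<subseteq> V" using C1 C C2 d by (auto simp: connector_def)
  ultimately show ?thesis unfolding connector_def using card d xS1 yS2 by auto
qed

lemma glueB:
  assumes c1: "c \<ge> 1" and p1: "p \<ge> 1"
    and C1: "connector V E c x y S1" and C: "connector V E p x' y' S" and C2: "connector V E c x' x S2"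
    and d: "S1 \<inter> S = {}" "y' \<notin> S1" "x' \<notin> S1" "S1 \<inter> S2 = {}" "S \<inter> S2 = {}" "y' \<notin> S2" "y \<notin> S2"
      "x \<notin> S" "y \<notin> S" "x \<noteq> x'" "x \<noteq> y'" "y \<noteq> x'" "y \<noteq> y'" "x' \<noteq> y'"
      "x' \<in> V" "y' \<in> V"
  shows "connector V E (2*c+p) x y (S1 \<union> insert y' (S \<union> insert x' S2))"
proof -
  have cS1: "card S1 = 4*c-1" and cS: "card S = 4*p-1" and cS2: "card S2 = 4*c-1"
    using C1 C C2 by (auto simp: connector_def)
  have fin: "finite S1" "finite S" "finite S2"
    using cS1 cS cS2 c1 p1 by (auto intro: card_ge_0_finite)
  have x'S2: "x' \<notin> S2" and x'S: "x' \<notin> S" and y'S: "y' \<notin> S" and xS2: "x \<notin> S2" and xS1: "x \<notin> S1" and yS1: "y \<notin> S1"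
    using C1 C C2 by (auto simp: connector_def)
  have e1: "card (S \<union> S2) = card S + card S2" using fin d by (intro card_Un_disjoint) auto
  have e2: "card (S1 \<union> (S \<union> S2)) = card S1 + card (S \<union> S2)" using fin d by (intro card_Un_disjoint) auto
  have "card (S1 \<union> insert y' (S \<union> insert x' S2)) = card S1 + (Suc (card S + Suc (card S2)))"
    using fin d x'S2 x'S y'S by (simp add: e1 e2 card_insert_if)
  also have "\<dots> = 4*(2*c+p) - 1" using cS1 cS cS2 c1 p1 by simp
  finally have card: "card (S1 \<union> insert y' (S \<union> insert x' S2)) = 4*(2*c+p) - 1" .
  have f1: "has_K4m_factor E (insert x S1)" and f2: "has_K4m_factor E (insert y' S)" and f3: "has_K4m_factor E (insert x' S2)"
   and g1: "has_K4m_factor E (insert y S1)"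
    using C1 C C2 by (auto simp: connector_def)
  have "has_K4m_factor E (insert x S1 \<union> (insert y' S \<union> insert x' S2))"
    using d x'S2 x'S y'S xS2 xS1
    by (intro factor_union f1 f2 f3) auto
  moreover have "insert x (S1 \<union> insert y' (S \<union> insert x' S2)) = insert x S1 \<union> (insert y' S \<union> insert x' S2)" by auto
  moreover have "has_K4m_factor E (insert y S1 \<union> (insert y' S \<union> insert x' S2))"
    using d x'S2 x'S y'S yS1
    by (intro factor_union g1 f2 f3) auto
  moreover have "insert y (S1 \<union> insert y' (S \<union> insert x' S2)) = insert y S1 \<union> (insert y' S \<union> insert x' S2)" by auto
  moreover have "S1 \<union> insert y' (S \<union> insert x' S2) \<subseteq> V" using C1 C C2 d by (auto simp: connector_def)
  ultimately show ?thesis unfolding connector_def using card d xS1 yS1 xS2 by auto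
qed

lemma fiber_le:
  assumes "finite T" "W \<subseteq> (T \<times> T \<times> Pow T) \<times> Pow T \<times> Pow T"
  shows "card W \<le> card T ^ 2 * 8 ^ card T"
proof -
  have "card W \<le> card ((T \<times> T \<times> Pow T) \<times> Pow T \<times> Pow T)"
    using assms by (intro card_mono) auto
  also have "\<dots> = card T * card T * 2 ^ card T * 2 ^ card T * 2 ^ card T"
    using assms by (simp add: card_cartesian_product card_Pow)
  also have "\<dots> = card T ^ 2 * 8 ^ card T"
    by (simp add: power2_eq_square power_mult_distrib[symmetric])
  finally show ?thesis .
qed

definition Kc :: "nat \<Rightarrow> nat \<Rightarrow> nat" where
  "Kc c p = (4*(2*c+p)-1)^2 * 8^(4*(2*c+p)-1)"

lemma Kc_pos: "c \<ge> 1 \<Longrightarrow> Kc c p > 0" by (simp add: Kc_def)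

lemma card_insert_le1: "finite A \<Longrightarrow> card (insert a A) \<le> Suc (card A)"
  by (simp add: card_insert_if)

lemma final_arith:
  fixes \<eta> \<epsilon> a gc :: real and K :: nat
  assumes "a = \<eta>/2 * real n ^ (4*c-1)" "gc \<ge> \<epsilon>/2 * real n ^ (4*p+1)"
    "gc * a * a \<le> real K * cC" "K > 0" "\<eta> > 0" "\<epsilon> > 0" "c \<ge> 1" "p \<ge> 1"
  shows "\<epsilon>*\<eta>^2/(8*real K) * real n ^ (4*(2*c+p)-1) \<le> cC"
proof -
  have a0: "a \<ge> 0" unfolding assms(1) using assms(5) by simp
  have "\<epsilon>/2 * real n ^ (4*p+1) * a * a \<le> gc * a * a"
    using assms(2) a0 by (intro mult_right_mono) auto
  also have "\<dots> \<le> real K * cC" by fact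
  finally have *: "\<epsilon>/2 * real n ^ (4*p+1) * a * a \<le> real K * cC" .
  have ex: "4*(2*c+p)-1 = (4*p+1) + (4*c-1) + (4*c-1)" using assms(7,8) by simp
  have eq: "\<epsilon>/2 * real n ^ (4*p+1) * a * a = \<epsilon>*\<eta>^2/8 * real n ^ (4*(2*c+p)-1)"
    unfolding ex power_add assms(1) by (simp add: power2_eq_square field_simps)
  have "\<epsilon>*\<eta>^2/8 * real n ^ (4*(2*c+p)-1) \<le> real K * cC" using * eq by linarith
  thus ?thesis using assms(4) by (simp add: field_simps)
qed

lemma coreA:
  fixes \<eta> \<epsilon> :: real and V :: "'a set"
  assumes tg: "three_graph V E" and nV: "card V = n" and XV: "X \<subseteq> V" and YV: "Y \<subseteq> V"
    and XY: "X \<inter> Y = {}" and cX: "closed V E c \<eta> X" and cY: "closed V E c \<eta> Y"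
    and br: "\<epsilon> * real n ^ (4*p+1) \<le> real (card (bridges V E p X Y))"
    and c1: "c \<ge> 1" and p1: "p \<ge> 1" and eta: "\<eta> > 0" and eps: "\<epsilon> > 0"
    and n1: "real n \<ge> 1" and n2: "real n \<ge> 8/\<epsilon>" and n3: "real n \<ge> 2 * real (4*c+4*p) / \<eta>"
    and xX: "x \<in> X" and yY: "y \<in> Y"
  shows "\<epsilon>*\<eta>^2/(8*real (Kc c p)) * real n ^ (4*(2*c+p)-1) \<le> real (card {T. connector V E (2*c+p) x y T})"
proof -
  let ?Br = "bridges V E p X Y"
  define G where "G = {g \<in> ?Br. fst g \<noteq> x \<and> fst (snd g) \<noteq> y \<and> x \<notin> snd (snd g) \<and> y \<notin> snd (snd g)}"
  have Gc: "finite G \<and> real (card G) \<ge> \<epsilon>/2 * real n ^ (4*p+1)"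
    by (rule good_bridges[OF tg XV YV nV p1 br n1 n2 eps _ _ bad1[OF tg XV YV nV p1, of x]
          bad2[OF tg XV YV nV p1, of y] bad3[OF tg XV YV nV p1, of x] bad3[OF tg XV YV nV p1, of y]])
       (auto simp: G_def)
  define a where "a = \<eta>/2 * real n ^ (4*c-1)"
  define A where "A (g::'a \<times> 'a \<times> 'a set) = {S1. connector V E c x (fst g) S1 \<and> S1 \<inter> insert (fst (snd g)) (insert y (snd (snd g))) = {}}" for g
  define B where "B (g::'a \<times> 'a \<times> 'a set) S1 = {S2. connector V E c (fst (snd g)) y S2 \<and> S2 \<inter> (S1 \<union> insert (fst g) (insert x (snd (snd g)))) = {}}" for g S1
  define f where "f (g::'a \<times> 'a \<times> 'a set) S1 S2 = S1 \<union> insert (fst g) (insert (fst (snd g)) (snd (snd g) \<union> S2))" for g S1 S2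
  define C where "C = {T. connector V E (2*c+p) x y T}"
  have memG: "x' \<in> X \<and> y' \<in> Y \<and> connector V E p x' y' S \<and> x' \<noteq> x \<and> y' \<noteq> y \<and> x \<notin> S \<and> y \<notin> S"
    if "(x',y',S) \<in> G" for x' y' S using that by (auto simp: G_def bridges_def)
  have cardS: "card S = 4*p-1" and finS: "finite S" if "(x',y',S) \<in> G" for x' y' S
    using memG[OF that] p1 by (auto simp: connector_def intro: card_ge_0_finite)
  have hA: "finite (A g) \<and> real (card (A g)) \<ge> a" if "g \<in> G" for g
  proof -
    obtain x' y' S where g: "g = (x',y',S)" by (cases g)
    have m: "x' \<in> X \<and> y' \<in> Y \<and> connector V E p x' y' S \<and> x' \<noteq> x \<and> y' \<noteq> y \<and> x \<notin> S \<and> y \<notin> S"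
      using memG that g by auto
    have cl: "close V E c \<eta> x x'" using cX xX m unfolding closed_def by auto
    have fS: "finite S" "card S = 4*p-1" using cardS finS that g by auto
    have "card (insert y' (insert y S)) \<le> Suc (Suc (card S))"
      using fS card_insert_le1[of "insert y S" y'] card_insert_le1[of S y] by simp
    hence cZ: "card (insert y' (insert y S)) \<le> 4*c+4*p" using fS p1 c1 by simp
    show ?thesis unfolding A_def a_def g using avoid[OF tg nV cl _ cZ c1 n1 n3 eta] fS by simp
  qed
  have hB: "finite (B g S1) \<and> real (card (B g S1)) \<ge> a" if "g \<in> G" "S1 \<in> A g" for g S1
  proof -
    obtain x' y' S where g: "g = (x',y',S)" by (cases g)
    have m: "x' \<in> X \<and> y' \<in> Y \<and> connector V E p x' y' S \<and> x' \<noteq> x \<and> y' \<noteq> y \<and> x \<notin> S \<and> y \<notin> S"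
      using memG that g by auto
    have cl: "close V E c \<eta> y' y" using cY yY m unfolding closed_def by auto
    have fS: "finite S" "card S = 4*p-1" using cardS finS that g by auto
    have S1: "card S1 = 4*c-1" using that(2) unfolding A_def g by (auto simp: connector_def)
    hence fS1: "finite S1" using c1 by (intro card_ge_0_finite) auto
    have "card (insert x' (insert x S)) \<le> Suc (Suc (card S))"
      using fS card_insert_le1[of "insert x S" x'] card_insert_le1[of S x] by simp
    hence "card (S1 \<union> insert x' (insert x S)) \<le> card S1 + Suc (Suc (card S))"
      using card_Un_le[of S1 "insert x' (insert x S)"] by simp
    hence cZ: "card (S1 \<union> insert x' (insert x S)) \<le> 4*c+4*p" using fS S1 p1 c1 by simp
    show ?thesis unfolding B_def a_def g using avoid[OF tg nV cl _ cZ c1 n1 n3 eta] fS fS1 by simp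
  qed
  have hf: "f g S1 S2 \<in> C" if "g \<in> G" "S1 \<in> A g" "S2 \<in> B g S1" for g S1 S2
  proof -
    obtain x' y' S where g: "g = (x',y',S)" by (cases g)
    have m: "x' \<in> X \<and> y' \<in> Y \<and> connector V E p x' y' S \<and> x' \<noteq> x \<and> y' \<noteq> y \<and> x \<notin> S \<and> y \<notin> S"
      using memG that g by auto
    have a1: "connector V E c x x' S1" "S1 \<inter> insert y' (insert y S) = {}" using that(2) unfolding A_def g by auto
    have b1: "connector V E c y' y S2" "S2 \<inter> (S1 \<union> insert x' (insert x S)) = {}" using that(3) unfolding B_def g by auto
    have "connector V E (2*c+p) x y (S1 \<union> insert x' (insert y' (S \<union> S2)))"
      using XY xX yY m XV YV a1 b1
      by (intro glueA[OF c1 p1 a1(1) _ b1(1)]) auto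
    thus ?thesis unfolding f_def C_def g by simp
  qed
  have fC: "finite C" unfolding C_def by (rule finite_conn[OF tg])
  have hfib: "card {(g,s,t). g \<in> G \<and> s \<in> A g \<and> t \<in> B g s \<and> f g s t = T} \<le> Kc c p" if "T \<in> C" for T
  proof -
    have cT: "card T = 4*(2*c+p)-1" using that by (simp add: C_def connector_def)
    hence fT: "finite T" using c1 by (intro card_ge_0_finite) auto
    have "{(g,s,t). g \<in> G \<and> s \<in> A g \<and> t \<in> B g s \<and> f g s t = T} \<subseteq> (T \<times> T \<times> Pow T) \<times> Pow T \<times> Pow T"
      unfolding f_def by auto
    from fiber_le[OF fT this] show ?thesis unfolding Kc_def cT .
  qed
  have "real (card G) * a * a \<le> real (Kc c p) * real (card C)"
    by (rule count3[where G=G and A=A and a=a and B=B and b=a and f=f and C=C and K="Kc c p"]) (use Gc hA hB hf fC hfib eta in \<open>auto simp: a_def\<close>)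
  thus ?thesis unfolding C_def[symmetric]
    by (intro final_arith[OF a_def _ _ Kc_pos[OF c1] eta eps c1 p1, of "real (card G)"]) (use Gc in auto)
qed

lemma coreB:
  fixes \<eta> \<epsilon> :: real and V :: "'a set"
  assumes tg: "three_graph V E" and nV: "card V = n" and XV: "X \<subseteq> V" and YV: "Y \<subseteq> V"
    and XY: "X \<inter> Y = {}" and cX: "closed V E c \<eta> X" and cY: "closed V E c \<eta> Y"
    and br: "\<epsilon> * real n ^ (4*p+1) \<le> real (card (bridges V E p X Y))"
    and c1: "c \<ge> 1" and p1: "p \<ge> 1" and eta: "\<eta> > 0" and eps: "\<epsilon> > 0"
    and n1: "real n \<ge> 1" and n2: "real n \<ge> 8/\<epsilon>" and n3: "real n \<ge> 2 * real (4*c+4*p) / \<eta>"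
    and xX: "x \<in> X" and yY: "y \<in> X" and xy: "x \<noteq> y"
  shows "\<epsilon>*\<eta>^2/(8*real (Kc c p)) * real n ^ (4*(2*c+p)-1) \<le> real (card {T. connector V E (2*c+p) x y T})"
proof -
  let ?Br = "bridges V E p X Y"
  define G where "G = {g \<in> ?Br. fst g \<noteq> x \<and> fst g \<noteq> y \<and> x \<notin> snd (snd g) \<and> y \<notin> snd (snd g)}"
  have Gc: "finite G \<and> real (card G) \<ge> \<epsilon>/2 * real n ^ (4*p+1)"
    by (rule good_bridges[OF tg XV YV nV p1 br n1 n2 eps _ _ bad1[OF tg XV YV nV p1, of x]
          bad1[OF tg XV YV nV p1, of y] bad3[OF tg XV YV nV p1, of x] bad3[OF tg XV YV nV p1, of y]])
       (auto simp: G_def)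
  define a where "a = \<eta>/2 * real n ^ (4*c-1)"
  define A where "A (g::'a \<times> 'a \<times> 'a set) = {S1. connector V E c x y S1 \<and> S1 \<inter> insert (fst g) (insert (fst (snd g)) (snd (snd g))) = {}}" for g
  define B where "B (g::'a \<times> 'a \<times> 'a set) S1 = {S2. connector V E c (fst g) x S2 \<and> S2 \<inter> (S1 \<union> insert (fst (snd g)) (insert y (snd (snd g)))) = {}}" for g S1
  define f where "f (g::'a \<times> 'a \<times> 'a set) S1 S2 = S1 \<union> insert (fst (snd g)) (snd (snd g) \<union> insert (fst g) S2)" for g S1 S2
  define C where "C = {T. connector V E (2*c+p) x y T}"
  have memG: "x' \<in> X \<and> y' \<in> Y \<and> connector V E p x' y' S \<and> x' \<noteq> x \<and> x' \<noteq> y \<and> x \<notin> S \<and> y \<notin> S"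
    if "(x',y',S) \<in> G" for x' y' S using that by (auto simp: G_def bridges_def)
  have cardS: "card S = 4*p-1" and finS: "finite S" if "(x',y',S) \<in> G" for x' y' S
    using memG[OF that] p1 by (auto simp: connector_def intro: card_ge_0_finite)
  have hA: "finite (A g) \<and> real (card (A g)) \<ge> a" if "g \<in> G" for g
  proof -
    obtain x' y' S where g: "g = (x',y',S)" by (cases g)
    have m: "x' \<in> X \<and> y' \<in> Y \<and> connector V E p x' y' S \<and> x' \<noteq> x \<and> x' \<noteq> y \<and> x \<notin> S \<and> y \<notin> S"
      using memG that g by auto
    have cl: "close V E c \<eta> x y" using cX xX yY xy unfolding closed_def by auto
    have fS: "finite S" "card S = 4*p-1" using cardS finS that g by auto
    have "card (insert x' (insert y' S)) \<le> Suc (Suc (card S))"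
      using fS card_insert_le1[of "insert y' S" x'] card_insert_le1[of S y'] by simp
    hence cZ: "card (insert x' (insert y' S)) \<le> 4*c+4*p" using fS p1 c1 by simp
    show ?thesis unfolding A_def a_def g using avoid[OF tg nV cl _ cZ c1 n1 n3 eta] fS by simp
  qed
  have hB: "finite (B g S1) \<and> real (card (B g S1)) \<ge> a" if "g \<in> G" "S1 \<in> A g" for g S1
  proof -
    obtain x' y' S where g: "g = (x',y',S)" by (cases g)
    have m: "x' \<in> X \<and> y' \<in> Y \<and> connector V E p x' y' S \<and> x' \<noteq> x \<and> x' \<noteq> y \<and> x \<notin> S \<and> y \<notin> S"
      using memG that g by auto
    have cl: "close V E c \<eta> x' x" using cX xX m unfolding closed_def by auto
    have fS: "finite S" "card S = 4*p-1" using cardS finS that g by auto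
    have S1: "card S1 = 4*c-1" using that(2) unfolding A_def g by (auto simp: connector_def)
    hence fS1: "finite S1" using c1 by (intro card_ge_0_finite) auto
    have "card (insert y' (insert y S)) \<le> Suc (Suc (card S))"
      using fS card_insert_le1[of "insert y S" y'] card_insert_le1[of S y] by simp
    hence "card (S1 \<union> insert y' (insert y S)) \<le> card S1 + Suc (Suc (card S))"
      using card_Un_le[of S1 "insert y' (insert y S)"] by simp
    hence cZ: "card (S1 \<union> insert y' (insert y S)) \<le> 4*c+4*p" using fS S1 p1 c1 by simp
    show ?thesis unfolding B_def a_def g using avoid[OF tg nV cl _ cZ c1 n1 n3 eta] fS fS1 by simp
  qed
  have hf: "f g S1 S2 \<in> C" if "g \<in> G" "S1 \<in> A g" "S2 \<in> B g S1" for g S1 S2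
  proof -
    obtain x' y' S where g: "g = (x',y',S)" by (cases g)
    have m: "x' \<in> X \<and> y' \<in> Y \<and> connector V E p x' y' S \<and> x' \<noteq> x \<and> x' \<noteq> y \<and> x \<notin> S \<and> y \<notin> S"
      using memG that g by auto
    have a1: "connector V E c x y S1" "S1 \<inter> insert x' (insert y' S) = {}" using that(2) unfolding A_def g by auto
    have b1: "connector V E c x' x S2" "S2 \<inter> (S1 \<union> insert y' (insert y S)) = {}" using that(3) unfolding B_def g by auto
    have "connector V E (2*c+p) x y (S1 \<union> insert y' (S \<union> insert x' S2))"
      using XY xX yY m XV YV a1 b1
      by (intro glueB[OF c1 p1 a1(1) _ b1(1)]) auto
    thus ?thesis unfolding f_def C_def g by simp
  qed
  have fC: "finite C" unfolding C_def by (rule finite_conn[OF tg])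
  have hfib: "card {(g,s,t). g \<in> G \<and> s \<in> A g \<and> t \<in> B g s \<and> f g s t = T} \<le> Kc c p" if "T \<in> C" for T
  proof -
    have cT: "card T = 4*(2*c+p)-1" using that by (simp add: C_def connector_def)
    hence fT: "finite T" using c1 by (intro card_ge_0_finite) auto
    have "{(g,s,t). g \<in> G \<and> s \<in> A g \<and> t \<in> B g s \<and> f g s t = T} \<subseteq> (T \<times> T \<times> Pow T) \<times> Pow T \<times> Pow T"
      unfolding f_def by auto
    from fiber_le[OF fT this] show ?thesis unfolding Kc_def cT .
  qed
  have "real (card G) * a * a \<le> real (Kc c p) * real (card C)"
    by (rule count3[where G=G and A=A and a=a and B=B and b=a and f=f and C=C and K="Kc c p"]) (use Gc hA hB hf fC hfib eta in \<open>auto simp: a_def\<close>)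
  thus ?thesis unfolding C_def[symmetric]
    by (intro final_arith[OF a_def _ _ Kc_pos[OF c1] eta eps c1 p1, of "real (card G)"]) (use Gc in auto)
qed

theorem lemma5p3:
  fixes \<eta> \<epsilon> :: real and c p :: nat
  assumes "\<eta> > 0" and "\<epsilon> > 0" and "c \<ge> 1" and "p \<ge> 1"
  shows "\<exists>\<eta>'>0. \<exists>n0::nat. \<forall>n\<ge>n0. \<forall>(V::'a set) E X Y.
     three_graph V E \<and> card V = n \<and> X \<subseteq> V \<and> Y \<subseteq> V \<and> X \<inter> Y = {} \<and>
     closed V E c \<eta> X \<and> closed V E c \<eta> Y \<and>
     real (card (bridges V E p X Y)) \<ge> \<epsilon> * real n ^ (4*p + 1)
     \<longrightarrow> closed V E (2*c + p) \<eta>' (X \<union> Y)"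
proof -
  note eta = assms(1) and eps = assms(2) and c1 = assms(3) and p1 = assms(4)
  define \<eta>' where "\<eta>' = \<epsilon>*\<eta>^2/(8*real (Kc c p))"
  have pos: "\<eta>' > 0" unfolding \<eta>'_def using eta eps Kc_pos[OF c1] by simp
  define n0 where "n0 = nat \<lceil>max 1 (max (8/\<epsilon>) (2 * real (4*c+4*p) / \<eta>))\<rceil>"
  have main: "closed V E (2*c + p) \<eta>' (X \<union> Y)"
    if n: "n \<ge> n0" and tg: "three_graph V E" and nV: "card V = n" and XV: "X \<subseteq> V" and YV: "Y \<subseteq> V"
      and XY: "X \<inter> Y = {}" and cX: "closed V E c \<eta> X" and cY: "closed V E c \<eta> Y"
      and br: "real (card (bridges V E p X Y)) \<ge> \<epsilon> * real n ^ (4*p + 1)"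
    for n and V :: "'a set" and E X Y
  proof -
    have "real n \<ge> real n0" using n by simp
    moreover have "real n0 \<ge> max 1 (max (8/\<epsilon>) (2 * real (4*c+4*p) / \<eta>))"
      unfolding n0_def by linarith
    ultimately have n1: "real n \<ge> 1" and n2: "real n \<ge> 8/\<epsilon>" and n3: "real n \<ge> 2 * real (4*c+4*p) / \<eta>"
      by auto
    have YX: "Y \<inter> X = {}" using XY by auto
    have br': "real (card (bridges V E p Y X)) \<ge> \<epsilon> * real n ^ (4*p + 1)" using br bridges_swap by metis
    show ?thesis unfolding closed_def
    proof (intro ballI impI)
      fix x y assume x: "x \<in> X \<union> Y" and y: "y \<in> X \<union> Y" and xy: "x \<noteq> y"
      have "\<eta>' * real n ^ (4*(2*c+p)-1) \<le> real (card {T. connector V E (2*c+p) x y T})"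
      proof -
        consider "x \<in> X" "y \<in> Y" | "x \<in> Y" "y \<in> X" | "x \<in> X" "y \<in> X" | "x \<in> Y" "y \<in> Y"
          using x y by auto
        then show ?thesis
        proof cases
          case 1 then show ?thesis unfolding \<eta>'_def
            by (rule coreA[OF tg nV XV YV XY cX cY br c1 p1 eta eps n1 n2 n3])
        next
          case 2 then show ?thesis unfolding \<eta>'_def
            by (rule coreA[OF tg nV YV XV YX cY cX br' c1 p1 eta eps n1 n2 n3])
        next
          case 3 then show ?thesis unfolding \<eta>'_def
            by (rule coreB[OF tg nV XV YV XY cX cY br c1 p1 eta eps n1 n2 n3 _ _ xy])
        next
          case 4 then show ?thesis unfolding \<eta>'_def
            by (rule coreB[OF tg nV YV XV YX cY cX br' c1 p1 eta eps n1 n2 n3 _ _ xy])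
        qed
      qed
      thus "close V E (2*c+p) \<eta>' x y" unfolding close_def nV by simp
    qed
  qed
  show ?thesis using pos main by blast
qed

end
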